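(* Let $(\Theta,\mathbf{Q},\leq)$ be a $\Theta$-projective system of size $t$ in a triangulated category $\mathcal{T}$, with triangles $K(i)\to Q(i)\xrightarrow{\beta_i}\Theta(i)\to K(i)[1]$. Then: (a) $\mathrm{Hom}_\mathcal{T}(K(j),\Theta(i))=0=\mathrm{Hom}_\mathcal{T}(\Theta(j),\Theta(i)[1])$ for all $j\ge i$; (b) $\mathrm{Hom}_\mathcal{T}(\beta_j,\Theta(i)):\mathrm{Hom}_\mathcal{T}(\Theta(j),\Theta(i))\to\mathrm{Hom}_\mathcal{T}(Q(j),\Theta(i))$ is an isomorphism of abelian groups for all $j\ge i$; (c) if $\mathrm{Hom}_\mathcal{T}(K(j)[2],\Theta(i))=0$ for all $i,j\in[1,t]$, then $\mathrm{Hom}_\mathcal{T}(\Theta(i),\Theta(j)[-1])=0$ for all $i,j$.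
   Context: $\mathfrak{F}(\mathcal{X})$: objects $M$ admitting distinguished triangles $M_{k-1}\to M_k\to X_k\to M_{k-1}[1]$ ($k=0,\dots,n$), $M_{-1}=0=X_0$, $M_n=M$, $X_k\in\mathcal{X}$ for $k\ge1$. A $\Theta$-projective system of size $t$: $\le$ a linear order on $[1,t]$; $\Theta(1),\dots,\Theta(t)$ non-zero with $\mathrm{Hom}(\Theta(j),\Theta(i))=0$ for $j>i$; $Q(1),\dots,Q(t)$ indecomposable with $Q=\bigoplus Q(i)$ satisfying $\mathrm{Hom}(Q,\Theta(j)[1])=0=\mathrm{Hom}(Q,\Theta(j)[-1])$ for all $j$; for each $i$ a distinguished triangle $K(i)\to Q(i)\xrightarrow{\beta_i}\Theta(i)\to K(i)[1]$ with $K(i)\in\mathfrak{F}(\{\Theta(j):j>i\})$ and $\mathrm{Hom}(K(i)[1],\Theta(i))=0$. Inequalities $j\ge i$, $j>i$ refer to $\le$. *)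

theory Defs
  imports "HOL-Algebra.Group" "HOL-Algebra.FiniteProduct"
begin

section \<open>Triangulated categories (with the shift an additive automorphism)\<close>

text \<open>A morphism is typed by membership
  in the hom sets; composition, addition are total operations which are only
  constrained on well-typed arguments.  cmp g f denotes g composed after f.\<close>

record ('o, 'm) tcat =
  Ob   :: "'o set"
  Hom  :: "'o \<Rightarrow> 'o \<Rightarrow> 'm set"
  cmp  :: "'m \<Rightarrow> 'm \<Rightarrow> 'm"
  idt  :: "'o \<Rightarrow> 'm"
  plus :: "'m \<Rightarrow> 'm \<Rightarrow> 'm"
  zer  :: "'o \<Rightarrow> 'o \<Rightarrow> 'm"
  sh   :: "'o \<Rightarrow> 'o"
  shm  :: "'m \<Rightarrow> 'm"
  Dist :: "('o \<times> 'o \<times> 'o \<times> 'm \<times> 'm \<times> 'm) set"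

definition homgrp :: "('o, 'm) tcat \<Rightarrow> 'o \<Rightarrow> 'o \<Rightarrow> 'm monoid" where
  "homgrp C X Y = \<lparr>carrier = Hom C X Y, mult = plus C, one = zer C X Y\<rparr>"

definition tneg :: "('o, 'm) tcat \<Rightarrow> 'o \<Rightarrow> 'o \<Rightarrow> 'm \<Rightarrow> 'm" where
  "tneg C X Y f = inv\<^bsub>homgrp C X Y\<^esub> f"

definition unsh :: "('o, 'm) tcat \<Rightarrow> 'o \<Rightarrow> 'o" where
  "unsh C X = inv_into (Ob C) (sh C) X"

definition hom_zero :: "('o, 'm) tcat \<Rightarrow> 'o \<Rightarrow> 'o \<Rightarrow> bool" where
  "hom_zero C X Y \<longleftrightarrow> Hom C X Y = {zer C X Y}"

definition is_zero_obj :: "('o, 'm) tcat \<Rightarrow> 'o \<Rightarrow> bool" where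
  "is_zero_obj C Z \<longleftrightarrow> Z \<in> Ob C \<and>
     (\<forall>X \<in> Ob C. (\<exists>!f. f \<in> Hom C Z X) \<and> (\<exists>!f. f \<in> Hom C X Z))"

definition is_iso :: "('o, 'm) tcat \<Rightarrow> 'o \<Rightarrow> 'o \<Rightarrow> 'm \<Rightarrow> bool" where
  "is_iso C X Y f \<longleftrightarrow> f \<in> Hom C X Y \<and>
     (\<exists>g \<in> Hom C Y X. cmp C g f = idt C X \<and> cmp C f g = idt C Y)"

definition biprod :: "('o, 'm) tcat \<Rightarrow> 'o \<Rightarrow> 'o \<Rightarrow> 'o \<Rightarrow> 'm \<Rightarrow> 'm \<Rightarrow> 'm \<Rightarrow> 'm \<Rightarrow> bool" where
  "biprod C A B S p1 p2 i1 i2 \<longleftrightarrow> S \<in> Ob C \<and>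
     p1 \<in> Hom C S A \<and> p2 \<in> Hom C S B \<and> i1 \<in> Hom C A S \<and> i2 \<in> Hom C B S \<and>
     cmp C p1 i1 = idt C A \<and> cmp C p2 i2 = idt C B \<and>
     cmp C p1 i2 = zer C B A \<and> cmp C p2 i1 = zer C A B \<and>
     plus C (cmp C i1 p1) (cmp C i2 p2) = idt C S"

definition biprod_fam :: "('o, 'm) tcat \<Rightarrow> 'i set \<Rightarrow> ('i \<Rightarrow> 'o) \<Rightarrow> 'o \<Rightarrow> ('i \<Rightarrow> 'm) \<Rightarrow> ('i \<Rightarrow> 'm) \<Rightarrow> bool" where
  "biprod_fam C I A S p e \<longleftrightarrow> S \<in> Ob C \<and>
     (\<forall>i \<in> I. p i \<in> Hom C S (A i) \<and> e i \<in> Hom C (A i) S) \<and>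
     (\<forall>i \<in> I. \<forall>j \<in> I. cmp C (p i) (e j) = (if i = j then idt C (A i) else zer C (A j) (A i))) \<and>
     finprod (homgrp C S S) (\<lambda>i. cmp C (e i) (p i)) I = idt C S"

definition indecomposable :: "('o, 'm) tcat \<Rightarrow> 'o \<Rightarrow> bool" where
  "indecomposable C X \<longleftrightarrow> X \<in> Ob C \<and> \<not> is_zero_obj C X \<and>
     (\<forall>A B p1 p2 i1 i2. A \<in> Ob C \<and> B \<in> Ob C \<and> biprod C A B X p1 p2 i1 i2 \<longrightarrow>
         is_zero_obj C A \<or> is_zero_obj C B)"

definition tri_morph :: "('o, 'm) tcat \<Rightarrow> ('o \<times> 'o \<times> 'o \<times> 'm \<times> 'm \<times> 'm) \<Rightarrow>
    ('o \<times> 'o \<times> 'o \<times> 'm \<times> 'm \<times> 'm) \<Rightarrow> 'm \<Rightarrow> 'm \<Rightarrow> 'm \<Rightarrow> bool" where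
  "tri_morph C T T' f g h \<longleftrightarrow>
     (case T of (X, Y, Z, u, v, w) \<Rightarrow> case T' of (X', Y', Z', u', v', w') \<Rightarrow>
       f \<in> Hom C X X' \<and> g \<in> Hom C Y Y' \<and> h \<in> Hom C Z Z' \<and>
       cmp C g u = cmp C u' f \<and> cmp C h v = cmp C v' g \<and>
       cmp C (shm C f) w = cmp C w' h)"

definition tri_iso :: "('o, 'm) tcat \<Rightarrow> ('o \<times> 'o \<times> 'o \<times> 'm \<times> 'm \<times> 'm) \<Rightarrow>
    ('o \<times> 'o \<times> 'o \<times> 'm \<times> 'm \<times> 'm) \<Rightarrow> 'm \<Rightarrow> 'm \<Rightarrow> 'm \<Rightarrow> bool" where
  "tri_iso C T T' f g h \<longleftrightarrow> tri_morph C T T' f g h \<and>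
     (case T of (X, Y, Z, u, v, w) \<Rightarrow> case T' of (X', Y', Z', u', v', w') \<Rightarrow>
        is_iso C X X' f \<and> is_iso C Y Y' g \<and> is_iso C Z Z' h)"

definition triangulated :: "('o, 'm) tcat \<Rightarrow> bool" where
  "triangulated C \<longleftrightarrow>
   \<comment> \<open>category\<close>
   (\<forall>X Y. (X \<notin> Ob C \<or> Y \<notin> Ob C) \<longrightarrow> Hom C X Y = {}) \<and>
   (\<forall>X \<in> Ob C. idt C X \<in> Hom C X X) \<and>
   (\<forall>X Y Z f g. f \<in> Hom C X Y \<longrightarrow> g \<in> Hom C Y Z \<longrightarrow> cmp C g f \<in> Hom C X Z) \<and>
   (\<forall>W X Y Z f g h. f \<in> Hom C W X \<longrightarrow> g \<in> Hom C X Y \<longrightarrow> h \<in> Hom C Y Z \<longrightarrow>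
       cmp C h (cmp C g f) = cmp C (cmp C h g) f) \<and>
   (\<forall>X Y f. f \<in> Hom C X Y \<longrightarrow> cmp C (idt C Y) f = f \<and> cmp C f (idt C X) = f) \<and>
   \<comment> \<open>preadditive\<close>
   (\<forall>X \<in> Ob C. \<forall>Y \<in> Ob C. comm_group (homgrp C X Y)) \<and>
   (\<forall>X Y Z f g g'. f \<in> Hom C X Y \<longrightarrow> g \<in> Hom C Y Z \<longrightarrow> g' \<in> Hom C Y Z \<longrightarrow>
       cmp C (plus C g g') f = plus C (cmp C g f) (cmp C g' f)) \<and>
   (\<forall>X Y Z f f' g. f \<in> Hom C X Y \<longrightarrow> f' \<in> Hom C X Y \<longrightarrow> g \<in> Hom C Y Z \<longrightarrow>
       cmp C g (plus C f f') = plus C (cmp C g f) (cmp C g f')) \<and>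
   \<comment> \<open>additive\<close>
   (\<exists>Z. is_zero_obj C Z) \<and>
   (\<forall>A \<in> Ob C. \<forall>B \<in> Ob C. \<exists>S p1 p2 i1 i2. biprod C A B S p1 p2 i1 i2) \<and>
   \<comment> \<open>shift: additive automorphism\<close>
   bij_betw (sh C) (Ob C) (Ob C) \<and>
   (\<forall>X \<in> Ob C. \<forall>Y \<in> Ob C. bij_betw (shm C) (Hom C X Y) (Hom C (sh C X) (sh C Y))) \<and>
   (\<forall>X \<in> Ob C. shm C (idt C X) = idt C (sh C X)) \<and>
   (\<forall>X Y Z f g. f \<in> Hom C X Y \<longrightarrow> g \<in> Hom C Y Z \<longrightarrow>
       shm C (cmp C g f) = cmp C (shm C g) (shm C f)) \<and>
   (\<forall>X Y f g. f \<in> Hom C X Y \<longrightarrow> g \<in> Hom C X Y \<longrightarrow>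
       shm C (plus C f g) = plus C (shm C f) (shm C g)) \<and>
   \<comment> \<open>distinguished triangles are triangles\<close>
   (\<forall>X Y Z u v w. (X, Y, Z, u, v, w) \<in> Dist C \<longrightarrow>
       u \<in> Hom C X Y \<and> v \<in> Hom C Y Z \<and> w \<in> Hom C Z (sh C X)) \<and>
   \<comment> \<open>TR1\<close>
   (\<forall>T T' f g h. T \<in> Dist C \<longrightarrow> tri_iso C T T' f g h \<longrightarrow> T' \<in> Dist C) \<and>
   (\<forall>X \<in> Ob C. \<forall>Z. is_zero_obj C Z \<longrightarrow>
       (X, X, Z, idt C X, zer C X Z, zer C Z (sh C X)) \<in> Dist C) \<and>
   (\<forall>X Y u. u \<in> Hom C X Y \<longrightarrow> (\<exists>Z v w. (X, Y, Z, u, v, w) \<in> Dist C)) \<and>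
   \<comment> \<open>TR2 (rotation)\<close>
   (\<forall>X Y Z u v w. u \<in> Hom C X Y \<longrightarrow>
       ((X, Y, Z, u, v, w) \<in> Dist C \<longleftrightarrow>
        (Y, Z, sh C X, v, w, tneg C (sh C X) (sh C Y) (shm C u)) \<in> Dist C)) \<and>
   \<comment> \<open>TR3\<close>
   (\<forall>X Y Z u v w X' Y' Z' u' v' w' f g.
       (X, Y, Z, u, v, w) \<in> Dist C \<longrightarrow> (X', Y', Z', u', v', w') \<in> Dist C \<longrightarrow>
       f \<in> Hom C X X' \<longrightarrow> g \<in> Hom C Y Y' \<longrightarrow> cmp C g u = cmp C u' f \<longrightarrow>
       (\<exists>h. tri_morph C (X, Y, Z, u, v, w) (X', Y', Z', u', v', w') f g h)) \<and>
   \<comment> \<open>TR4 (octahedral axiom)\<close>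
   (\<forall>X Y Z Z' X' Y' u v i i' j j' k k'.
       (X, Y, Z', u, i, i') \<in> Dist C \<longrightarrow>
       (Y, Z, X', v, j, j') \<in> Dist C \<longrightarrow>
       (X, Z, Y', cmp C v u, k, k') \<in> Dist C \<longrightarrow>
       (\<exists>f g. (Z', Y', X', f, g, cmp C (shm C i) j') \<in> Dist C \<and>
              cmp C f i = cmp C k v \<and> cmp C k' f = i' \<and>
              cmp C g k = j \<and> cmp C j' g = cmp C (shm C u) k'))"

text \<open>The extension closure \<F>(\<X>): M_{k-1} \<rightarrow> M_k \<rightarrow> X_k \<rightarrow> M_{k-1}[1], k = 0..n,
  with M_{-1} = 0 = X_0, M_n = M, X_k \<in> \<X> for k \<ge> 1.  To index by nat we
  write Ms k for M_{k-1} (k = 0..n+1).\<close>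
definition filt :: "('o, 'm) tcat \<Rightarrow> 'o set \<Rightarrow> 'o set" where
  "filt C \<X> = {M. \<exists>(n::nat) (Ms::nat \<Rightarrow> 'o) (Xs::nat \<Rightarrow> 'o) us vs ws.
      is_zero_obj C (Ms 0) \<and> is_zero_obj C (Xs 0) \<and> Ms (Suc n) = M \<and>
      (\<forall>k \<in> {1..n}. Xs k \<in> \<X>) \<and>
      (\<forall>k \<le> n. (Ms k, Ms (Suc k), Xs k, us k, vs k, ws k) \<in> Dist C)}"

text \<open>The linear order \<le> on [1,t] is the relation r;
  j > i means (i,j) \<in> r and i \<noteq> j.  Q is a chosen direct sum of Q(1),...,Q(t), with
  projections pQ and injections eQ.  The distinguished triangles are
  K(i) \<rightarrow>(a i) Q(i) \<rightarrow>(\<beta> i) \<Theta>(i) \<rightarrow>(c i) K(i)[1].\<close>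
definition theta_proj_system ::
  "('o, 'm) tcat \<Rightarrow> nat \<Rightarrow> (nat \<times> nat) set \<Rightarrow> (nat \<Rightarrow> 'o) \<Rightarrow> (nat \<Rightarrow> 'o) \<Rightarrow> 'o \<Rightarrow>
   (nat \<Rightarrow> 'm) \<Rightarrow> (nat \<Rightarrow> 'm) \<Rightarrow> (nat \<Rightarrow> 'o) \<Rightarrow> (nat \<Rightarrow> 'm) \<Rightarrow> (nat \<Rightarrow> 'm) \<Rightarrow> (nat \<Rightarrow> 'm) \<Rightarrow> bool"
  where
  "theta_proj_system C t r \<Theta> Q Qs pQ eQ K a \<beta> c \<longleftrightarrow>
     linear_order_on {1..t} r \<and>
     (\<forall>i \<in> {1..t}. \<Theta> i \<in> Ob C \<and> \<not> is_zero_obj C (\<Theta> i)) \<and>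
     (\<forall>i \<in> {1..t}. \<forall>j \<in> {1..t}. (i, j) \<in> r \<and> i \<noteq> j \<longrightarrow> hom_zero C (\<Theta> j) (\<Theta> i)) \<and>
     (\<forall>i \<in> {1..t}. indecomposable C (Q i)) \<and>
     biprod_fam C {1..t} Q Qs pQ eQ \<and>
     (\<forall>j \<in> {1..t}. hom_zero C Qs (sh C (\<Theta> j)) \<and> hom_zero C Qs (unsh C (\<Theta> j))) \<and>
     (\<forall>i \<in> {1..t}. (K i, Q i, \<Theta> i, a i, \<beta> i, c i) \<in> Dist C \<and>
        K i \<in> filt C {\<Theta> j | j. j \<in> {1..t} \<and> (i, j) \<in> r \<and> i \<noteq> j} \<and>
        hom_zero C (sh C (K i)) (\<Theta> i))"

end

theory Submission imports Defs "HOL-Algebra.Coset"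
begin

lemma homgrp_simps[simp]: "carrier (homgrp C X Y) = Hom C X Y" "mult (homgrp C X Y) = plus C"
  "one (homgrp C X Y) = zer C X Y"
  by (simp_all add: homgrp_def)

context fixes C :: "('o,'m) tcat" assumes T: "triangulated C"
begin

lemma ax_hom_ob: "(\<forall>X Y. (X \<notin> Ob C \<or> Y \<notin> Ob C) \<longrightarrow> Hom C X Y = {})"
  using T unfolding triangulated_def by (elim conjE) assumption
lemma ax_id: "(\<forall>X \<in> Ob C. idt C X \<in> Hom C X X)"
  using T unfolding triangulated_def by (elim conjE) assumption
lemma ax_cmp: "(\<forall>X Y Z f g. f \<in> Hom C X Y \<longrightarrow> g \<in> Hom C Y Z \<longrightarrow> cmp C g f \<in> Hom C X Z)"
  using T unfolding triangulated_def by (elim conjE) assumption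
lemma ax_assoc: "(\<forall>W X Y Z f g h. f \<in> Hom C W X \<longrightarrow> g \<in> Hom C X Y \<longrightarrow> h \<in> Hom C Y Z \<longrightarrow>
       cmp C h (cmp C g f) = cmp C (cmp C h g) f)"
  using T unfolding triangulated_def by (elim conjE) assumption
lemma ax_idl: "(\<forall>X Y f. f \<in> Hom C X Y \<longrightarrow> cmp C (idt C Y) f = f \<and> cmp C f (idt C X) = f)"
  using T unfolding triangulated_def by (elim conjE) assumption
lemma ax_grp: "(\<forall>X \<in> Ob C. \<forall>Y \<in> Ob C. comm_group (homgrp C X Y))"
  using T unfolding triangulated_def by (elim conjE) assumption
lemma ax_distl: "(\<forall>X Y Z f g g'. f \<in> Hom C X Y \<longrightarrow> g \<in> Hom C Y Z \<longrightarrow> g' \<in> Hom C Y Z \<longrightarrow>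
       cmp C (plus C g g') f = plus C (cmp C g f) (cmp C g' f))"
  using T unfolding triangulated_def by (elim conjE) assumption
lemma ax_distr: "(\<forall>X Y Z f f' g. f \<in> Hom C X Y \<longrightarrow> f' \<in> Hom C X Y \<longrightarrow> g \<in> Hom C Y Z \<longrightarrow>
       cmp C g (plus C f f') = plus C (cmp C g f) (cmp C g f'))"
  using T unfolding triangulated_def by (elim conjE) assumption
lemma ax_zero: "(\<exists>Z. is_zero_obj C Z)"
  using T unfolding triangulated_def by (elim conjE) assumption
lemma ax_shbij: "bij_betw (sh C) (Ob C) (Ob C)"
  using T unfolding triangulated_def by (elim conjE) assumption
lemma ax_shmbij: "(\<forall>X \<in> Ob C. \<forall>Y \<in> Ob C. bij_betw (shm C) (Hom C X Y) (Hom C (sh C X) (sh C Y)))"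
  using T unfolding triangulated_def by (elim conjE) assumption
lemma ax_shplus: "(\<forall>X Y f g. f \<in> Hom C X Y \<longrightarrow> g \<in> Hom C X Y \<longrightarrow>
       shm C (plus C f g) = plus C (shm C f) (shm C g))"
  using T unfolding triangulated_def by (elim conjE) assumption
lemma ax_disthom: "(\<forall>X Y Z u v w. (X, Y, Z, u, v, w) \<in> Dist C \<longrightarrow>
       u \<in> Hom C X Y \<and> v \<in> Hom C Y Z \<and> w \<in> Hom C Z (sh C X))"
  using T unfolding triangulated_def by (elim conjE) assumption
lemma ax_tr1: "(\<forall>X \<in> Ob C. \<forall>Z. is_zero_obj C Z \<longrightarrow>
       (X, X, Z, idt C X, zer C X Z, zer C Z (sh C X)) \<in> Dist C)"
  using T unfolding triangulated_def by (elim conjE) assumption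
lemma ax_tr2: "(\<forall>X Y Z u v w. u \<in> Hom C X Y \<longrightarrow>
       ((X, Y, Z, u, v, w) \<in> Dist C \<longleftrightarrow>
        (Y, Z, sh C X, v, w, tneg C (sh C X) (sh C Y) (shm C u)) \<in> Dist C))"
  using T unfolding triangulated_def by (elim conjE) assumption
lemma ax_tr3: "(\<forall>X Y Z u v w X' Y' Z' u' v' w' f g.
       (X, Y, Z, u, v, w) \<in> Dist C \<longrightarrow> (X', Y', Z', u', v', w') \<in> Dist C \<longrightarrow>
       f \<in> Hom C X X' \<longrightarrow> g \<in> Hom C Y Y' \<longrightarrow> cmp C g u = cmp C u' f \<longrightarrow>
       (\<exists>h. tri_morph C (X, Y, Z, u, v, w) (X', Y', Z', u', v', w') f g h))"
  using T unfolding triangulated_def by (elim conjE) assumption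

lemma hom_ob: "f \<in> Hom C X Y \<Longrightarrow> X \<in> Ob C \<and> Y \<in> Ob C"
  using ax_hom_ob by blast

lemma cmp_in: "f \<in> Hom C X Y \<Longrightarrow> g \<in> Hom C Y Z \<Longrightarrow> cmp C g f \<in> Hom C X Z"
  using ax_cmp by blast

lemma grp: "X \<in> Ob C \<Longrightarrow> Y \<in> Ob C \<Longrightarrow> comm_group (homgrp C X Y)"
  using ax_grp by blast

lemma grp': "X \<in> Ob C \<Longrightarrow> Y \<in> Ob C \<Longrightarrow> group (homgrp C X Y)"
  using grp comm_group.axioms(2) by blast

lemma zer_in: "X \<in> Ob C \<Longrightarrow> Y \<in> Ob C \<Longrightarrow> zer C X Y \<in> Hom C X Y"
  using group.is_monoid[OF grp'] monoid.one_closed by fastforce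

lemma cmp_zer_left:
  assumes f: "f \<in> Hom C X Y" and Z: "Z \<in> Ob C"
  shows "cmp C (zer C Y Z) f = zer C X Z"
proof -
  have ob: "X \<in> Ob C" "Y \<in> Ob C" using hom_ob[OF f] by auto
  let ?z = "zer C Y Z"
  have zi: "?z \<in> Hom C Y Z" using zer_in ob Z by auto
  have "plus C ?z ?z = ?z" using group.is_monoid[OF grp'[OF ob(2) Z]] monoid.l_one zi by fastforce
  hence "cmp C ?z f = plus C (cmp C ?z f) (cmp C ?z f)"
    using ax_distl zi f by metis
  moreover have "cmp C ?z f \<in> Hom C X Z" using cmp_in f zi by auto
  ultimately show ?thesis using group.l_cancel_one'[OF grp'[OF ob(1) Z]] by fastforce
qed

lemma cmp_zer_right:
  assumes g: "g \<in> Hom C Y Z" and X: "X \<in> Ob C"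
  shows "cmp C g (zer C X Y) = zer C X Z"
proof -
  have ob: "Y \<in> Ob C" "Z \<in> Ob C" using hom_ob[OF g] by auto
  let ?z = "zer C X Y"
  have zi: "?z \<in> Hom C X Y" using zer_in ob X by auto
  have "plus C ?z ?z = ?z" using group.is_monoid[OF grp'[OF X ob(1)]] monoid.l_one zi by fastforce
  hence "cmp C g ?z = plus C (cmp C g ?z) (cmp C g ?z)"
    using ax_distr zi g by metis
  moreover have "cmp C g ?z \<in> Hom C X Z" using cmp_in g zi by auto
  ultimately show ?thesis using group.l_cancel_one'[OF grp'[OF X ob(2)]] by fastforce
qed

lemma hom_zero_iff: "X \<in> Ob C \<Longrightarrow> Y \<in> Ob C \<Longrightarrow>
   hom_zero C X Y \<longleftrightarrow> (\<forall>f\<in>Hom C X Y. \<forall>g\<in>Hom C X Y. f = g)"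
  unfolding hom_zero_def using zer_in[of X Y] by auto

lemma zero_obj_hom: "is_zero_obj C Z \<Longrightarrow> X \<in> Ob C \<Longrightarrow> hom_zero C Z X \<and> hom_zero C X Z"
  using hom_zero_iff unfolding is_zero_obj_def by metis

lemma sh_ob: "X \<in> Ob C \<Longrightarrow> sh C X \<in> Ob C"
  using bij_betw_apply[OF ax_shbij] .

lemma unsh: "Y \<in> Ob C \<Longrightarrow> unsh C Y \<in> Ob C \<and> sh C (unsh C Y) = Y"
proof -
  have b: "bij_betw (sh C) (Ob C) (Ob C)" using ax_shbij .
  assume "Y \<in> Ob C" thus ?thesis unfolding unsh_def
    using bij_betw_imp_surj_on[OF b] f_inv_into_f[of Y "sh C" "Ob C"] inv_into_into[of Y "sh C" "Ob C"] by simp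
qed

lemma shm_bij: "X \<in> Ob C \<Longrightarrow> Y \<in> Ob C \<Longrightarrow> bij_betw (shm C) (Hom C X Y) (Hom C (sh C X) (sh C Y))"
  using ax_shmbij by simp

lemma hom_zero_sh: assumes "X \<in> Ob C" "Y \<in> Ob C"
  shows "hom_zero C (sh C X) (sh C Y) \<longleftrightarrow> hom_zero C X Y"
proof -
  have b: "bij_betw (shm C) (Hom C X Y) (Hom C (sh C X) (sh C Y))" using shm_bij assms by auto
  show ?thesis
    unfolding hom_zero_iff[OF sh_ob[OF assms(1)] sh_ob[OF assms(2)]] hom_zero_iff[OF assms]
    unfolding bij_betw_imp_surj_on[OF b, symmetric]
    using bij_betw_imp_inj_on[OF b] unfolding inj_on_def by auto
qed

lemma sh_zero_obj: assumes Z: "is_zero_obj C Z" shows "is_zero_obj C (sh C Z)"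
proof -
  have Zo: "Z \<in> Ob C" using Z unfolding is_zero_obj_def by (elim conjE)
  have b: "bij_betw (sh C) (Ob C) (Ob C)" using ax_shbij .
  { fix X assume X: "X \<in> Ob C"
    have "X \<in> sh C ` Ob C" using bij_betw_imp_surj_on[OF b] X by simp
    then obtain X' where X': "X' \<in> Ob C" "X = sh C X'" by blast
    have "hom_zero C (sh C Z) X \<and> hom_zero C X (sh C Z)"
      unfolding X'(2) hom_zero_sh[OF Zo X'(1)] hom_zero_sh[OF X'(1) Zo] using zero_obj_hom[OF Z X'(1)] .
    hence "(\<exists>!f. f \<in> Hom C (sh C Z) X) \<and> (\<exists>!f. f \<in> Hom C X (sh C Z))"
      unfolding hom_zero_def by (intro conjI; simp) }
  thus ?thesis unfolding is_zero_obj_def using sh_ob[OF Zo] by blast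
qed


lemma dist_hom: "(X,Y,Z,u,v,w) \<in> Dist C \<Longrightarrow> u \<in> Hom C X Y \<and> v \<in> Hom C Y Z \<and> w \<in> Hom C Z (sh C X)"
  using ax_disthom by simp

lemma rot: assumes D: "(X,Y,Z,u,v,w) \<in> Dist C" shows "(Y,Z,sh C X,v,w,tneg C (sh C X) (sh C Y) (shm C u)) \<in> Dist C"
proof -
  have u: "u \<in> Hom C X Y" using dist_hom[OF D] by simp
  show ?thesis using ax_tr2[rule_format, OF u, THEN iffD1, OF D] .
qed

lemma zero_tri: assumes W: "W \<in> Ob C" and Z0: "is_zero_obj C Z0"
  shows "(Z0, W, W, zer C Z0 W, idt C W, zer C W (sh C Z0)) \<in> Dist C"
proof -
  have Zo: "Z0 \<in> Ob C" using Z0 unfolding is_zero_obj_def by (elim conjE)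
  have sZ: "is_zero_obj C (sh C Z0)" using sh_zero_obj Z0 by blast
  have t1: "(W, W, sh C Z0, idt C W, zer C W (sh C Z0), zer C (sh C Z0) (sh C W)) \<in> Dist C"
    using ax_tr1[rule_format, OF W sZ] .
  have zi: "zer C Z0 W \<in> Hom C Z0 W" using zer_in Zo W by blast
  have "shm C (zer C Z0 W) \<in> Hom C (sh C Z0) (sh C W)"
    using shm_bij[OF Zo W] zi unfolding bij_betw_def by blast
  hence "tneg C (sh C Z0) (sh C W) (shm C (zer C Z0 W)) \<in> Hom C (sh C Z0) (sh C W)"
    unfolding tneg_def using group.inv_closed[OF grp'[OF sh_ob[OF Zo] sh_ob[OF W]]] by simp
  hence "tneg C (sh C Z0) (sh C W) (shm C (zer C Z0 W)) = zer C (sh C Z0) (sh C W)"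
    using zero_obj_hom[OF sZ sh_ob[OF W]] unfolding hom_zero_def by blast
  thus ?thesis using ax_tr2[rule_format, OF zi, THEN iffD2] t1 by simp
qed

lemma exact_lift:
  assumes D: "(X,Y,Z,u,v,w) \<in> Dist C" and g: "g \<in> Hom C Y W" and gu: "cmp C g u = zer C X W"
  shows "\<exists>h \<in> Hom C Z W. cmp C h v = g"
proof -
  obtain Z0 where Z0: "is_zero_obj C Z0" using ax_zero by blast
  have Zo: "Z0 \<in> Ob C" using Z0 unfolding is_zero_obj_def by (elim conjE)
  have W: "W \<in> Ob C" using hom_ob g by blast
  have u: "u \<in> Hom C X Y" and v: "v \<in> Hom C Y Z" using dist_hom D by auto
  have X: "X \<in> Ob C" using hom_ob u by blast
  have f: "zer C X Z0 \<in> Hom C X Z0" using zer_in X Zo by blast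
  have e: "cmp C g u = cmp C (zer C Z0 W) (zer C X Z0)" using cmp_zer_left[OF f W] gu by simp
  obtain h where h: "tri_morph C (X,Y,Z,u,v,w) (Z0, W, W, zer C Z0 W, idt C W, zer C W (sh C Z0)) (zer C X Z0) g h"
    using ax_tr3[rule_format, OF D zero_tri[OF W Z0] f g e] by blast
  hence "h \<in> Hom C Z W" "cmp C h v = cmp C (idt C W) g" unfolding tri_morph_def by auto
  moreover have "cmp C (idt C W) g = g" using ax_idl g by blast
  ultimately show ?thesis by auto
qed

lemma mid_zero:
  assumes D: "(X,Y,Z,u,v,w) \<in> Dist C" and W: "W \<in> Ob C"
    and hx: "hom_zero C X W" and hz: "hom_zero C Z W"
  shows "hom_zero C Y W"
proof -
  have u: "u \<in> Hom C X Y" and v: "v \<in> Hom C Y Z" using dist_hom D by auto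
  { fix g assume g: "g \<in> Hom C Y W"
    have "cmp C g u \<in> Hom C X W" using cmp_in u g by blast
    hence "cmp C g u = zer C X W" using hx unfolding hom_zero_def by blast
    then obtain h where h: "h \<in> Hom C Z W" "cmp C h v = g" using exact_lift[OF D g] by blast
    hence "h = zer C Z W" using hz unfolding hom_zero_def by blast
    hence "g = zer C Y W" using h cmp_zer_left[OF v W] by simp }
  moreover have "zer C Y W \<in> Hom C Y W" using zer_in hom_ob v W by blast
  ultimately show ?thesis unfolding hom_zero_def by blast
qed

lemma summand_zero:
  assumes B: "biprod_fam C I Q Qs p e" and i: "i \<in> I" and hz: "hom_zero C Qs W" and W: "W \<in> Ob C"
  shows "hom_zero C (Q i) W"
proof -
  have p: "p i \<in> Hom C Qs (Q i)" and e: "e i \<in> Hom C (Q i) Qs" and pe: "cmp C (p i) (e i) = idt C (Q i)"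
    using B i unfolding biprod_fam_def by auto
  { fix f assume f: "f \<in> Hom C (Q i) W"
    have "f = cmp C f (idt C (Q i))" using ax_idl f by metis
    also have "\<dots> = cmp C (cmp C f (p i)) (e i)" using pe ax_assoc e p f by metis
    also have "cmp C f (p i) = zer C Qs W" using hz cmp_in[OF p f] unfolding hom_zero_def by blast
    also have "cmp C (zer C Qs W) (e i) = zer C (Q i) W" using cmp_zer_left[OF e W] .
    finally have "f = zer C (Q i) W" . }
  moreover have "zer C (Q i) W \<in> Hom C (Q i) W" using zer_in hom_ob e W by blast
  ultimately show ?thesis unfolding hom_zero_def by blast
qed

lemma filt_zero:
  assumes M: "M \<in> filt C S" and W: "W \<in> Ob C" and hS: "\<And>X. X \<in> S \<Longrightarrow> hom_zero C X W"
  shows "hom_zero C M W"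
proof -
  obtain n Ms Xs us vs ws where m0: "is_zero_obj C (Ms 0)" and x0: "is_zero_obj C (Xs 0)"
    and mn: "Ms (Suc n) = M" and xs: "\<forall>k \<in> {1..n}. Xs k \<in> S"
    and ds: "\<forall>k \<le> n. (Ms k, Ms (Suc k), Xs k, us k, vs k, ws k) \<in> Dist C"
    using M unfolding filt_def by blast
  have "k \<le> Suc n \<Longrightarrow> hom_zero C (Ms k) W" for k
  proof (induction k)
    case 0 then show ?case using zero_obj_hom m0 W by blast
  next
    case (Suc k)
    have X: "hom_zero C (Xs k) W"
    proof (cases k)
      case 0 then show ?thesis using zero_obj_hom x0 W by blast
    next
      case (Suc k') then show ?thesis using xs hS Suc.prems by simp
    qed
    have kn: "k \<le> n" using Suc.prems by simp
    have "hom_zero C (Ms k) W" using Suc.IH kn by simp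
    then show ?case using mid_zero[OF _ W _ X] ds kn by blast
  qed
  thus ?thesis using mn by blast
qed

end

theorem proposition5p5:
  fixes C :: "('o, 'm) tcat"
  assumes "triangulated C"
    and "theta_proj_system C t r \<Theta> Q Qs pQ eQ K a \<beta> c"
  shows "(\<forall>i \<in> {1..t}. \<forall>j \<in> {1..t}. (i, j) \<in> r \<longrightarrow>
            hom_zero C (K j) (\<Theta> i) \<and> hom_zero C (\<Theta> j) (sh C (\<Theta> i))) \<and>
         (\<forall>i \<in> {1..t}. \<forall>j \<in> {1..t}. (i, j) \<in> r \<longrightarrow>
            (\<lambda>g. cmp C g (\<beta> j)) \<in> iso (homgrp C (\<Theta> j) (\<Theta> i)) (homgrp C (Q j) (\<Theta> i))) \<and>
         ((\<forall>i \<in> {1..t}. \<forall>j \<in> {1..t}. hom_zero C (sh C (sh C (K j))) (\<Theta> i)) \<longrightarrow>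
         (\<forall>i \<in> {1..t}. \<forall>j \<in> {1..t}. hom_zero C (\<Theta> i) (unsh C (\<Theta> j))))"
proof -
  note T = assms(1)
  have lo: "linear_order_on {1..t} r"
    using assms(2) unfolding theta_proj_system_def by (elim conjE) assumption
  have thob: "\<forall>i \<in> {1..t}. \<Theta> i \<in> Ob C \<and> \<not> is_zero_obj C (\<Theta> i)"
    using assms(2) unfolding theta_proj_system_def by (elim conjE) assumption
  have thz: "\<forall>i \<in> {1..t}. \<forall>j \<in> {1..t}. (i, j) \<in> r \<and> i \<noteq> j \<longrightarrow> hom_zero C (\<Theta> j) (\<Theta> i)"
    using assms(2) unfolding theta_proj_system_def by (elim conjE) assumption
  have bp: "biprod_fam C {1..t} Q Qs pQ eQ"
    using assms(2) unfolding theta_proj_system_def by (elim conjE) assumption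
  have qz: "\<forall>j \<in> {1..t}. hom_zero C Qs (sh C (\<Theta> j)) \<and> hom_zero C Qs (unsh C (\<Theta> j))"
    using assms(2) unfolding theta_proj_system_def by (elim conjE) assumption
  have tri: "\<forall>i \<in> {1..t}. (K i, Q i, \<Theta> i, a i, \<beta> i, c i) \<in> Dist C \<and>
        K i \<in> filt C {\<Theta> j | j. j \<in> {1..t} \<and> (i, j) \<in> r \<and> i \<noteq> j} \<and>
        hom_zero C (sh C (K i)) (\<Theta> i)"
    using assms(2) unfolding theta_proj_system_def by (elim conjE) assumption
  have tr: "trans r" and an: "antisym r"
    using lo unfolding linear_order_on_def partial_order_on_def preorder_on_def by auto
  have Tob: "\<Theta> i \<in> Ob C" if "i \<in> {1..t}" for i using thob that by blast
  have D0: "(K i, Q i, \<Theta> i, a i, \<beta> i, c i) \<in> Dist C" if "i \<in> {1..t}" for i using tri that by blast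
  have Kob: "K i \<in> Ob C" and Qob: "Q i \<in> Ob C" if "i \<in> {1..t}" for i
    using hom_ob[OF T] dist_hom[OF T D0[OF that]] by blast+
  have D1: "(Q i, \<Theta> i, sh C (K i), \<beta> i, c i, tneg C (sh C (K i)) (sh C (Q i)) (shm C (a i))) \<in> Dist C"
    if "i \<in> {1..t}" for i using rot[OF T D0[OF that]] .

  have KZ: "hom_zero C (K j) (\<Theta> i)" if ij: "i \<in> {1..t}" "j \<in> {1..t}" "(i, j) \<in> r" for i j
  proof (rule filt_zero[OF T _ Tob[OF ij(1)]])
    show "K j \<in> filt C {\<Theta> l | l. l \<in> {1..t} \<and> (j, l) \<in> r \<and> j \<noteq> l}" using tri ij by blast
  next
    fix X assume "X \<in> {\<Theta> l | l. l \<in> {1..t} \<and> (j, l) \<in> r \<and> j \<noteq> l}"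
    then obtain l where l: "X = \<Theta> l" "l \<in> {1..t}" "(j, l) \<in> r" "j \<noteq> l" by blast
    have il: "(i, l) \<in> r" using tr ij(3) l(3) unfolding trans_def by blast
    have "i \<noteq> l" using an ij(3) l(3,4) unfolding antisym_def by blast
    thus "hom_zero C X (\<Theta> i)" using thz ij(1) l(2) il l(1) by blast
  qed

  have PA: "hom_zero C (\<Theta> j) (sh C (\<Theta> i))" if ij: "i \<in> {1..t}" "j \<in> {1..t}" "(i, j) \<in> r" for i j
  proof (rule mid_zero[OF T D1[OF ij(2)] sh_ob[OF T Tob[OF ij(1)]]])
    show "hom_zero C (Q j) (sh C (\<Theta> i))"
      using summand_zero[OF T bp ij(2) _ sh_ob[OF T Tob[OF ij(1)]]] qz ij(1) by blast
    show "hom_zero C (sh C (K j)) (sh C (\<Theta> i))"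
      using hom_zero_sh[OF T Kob[OF ij(2)] Tob[OF ij(1)]] KZ[OF ij] by simp
  qed

  have PB: "(\<lambda>g. cmp C g (\<beta> j)) \<in> iso (homgrp C (\<Theta> j) (\<Theta> i)) (homgrp C (Q j) (\<Theta> i))"
    if ij: "i \<in> {1..t}" "j \<in> {1..t}" "(i, j) \<in> r" for i j
  proof -
    let ?G = "homgrp C (\<Theta> j) (\<Theta> i)" and ?H = "homgrp C (Q j) (\<Theta> i)" and ?f = "\<lambda>g. cmp C g (\<beta> j)"
    have b: "\<beta> j \<in> Hom C (Q j) (\<Theta> j)" and a: "a j \<in> Hom C (K j) (Q j)"
      using dist_hom[OF T D0[OF ij(2)]] by auto
    have gG: "group ?G" using grp'[OF T Tob[OF ij(2)] Tob[OF ij(1)]] .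
    have gH: "group ?H" using grp'[OF T Qob[OF ij(2)] Tob[OF ij(1)]] .
    have hom: "?f \<in> hom ?G ?H"
    proof (rule homI)
      fix x assume "x \<in> carrier ?G" thus "?f x \<in> carrier ?H" using cmp_in[OF T b] by simp
    next
      fix x y assume "x \<in> carrier ?G" "y \<in> carrier ?G"
      thus "?f (x \<otimes>\<^bsub>?G\<^esub> y) = ?f x \<otimes>\<^bsub>?H\<^esub> ?f y" using ax_distl[OF T] b by simp
    qed
    have gh: "group_hom ?G ?H ?f"
      unfolding group_hom_def group_hom_axioms_def using gG gH hom by simp
    have ker: "kernel ?G ?H ?f = {\<one>\<^bsub>?G\<^esub>}"
    proof
      show "kernel ?G ?H ?f \<subseteq> {\<one>\<^bsub>?G\<^esub>}"
      proof
        fix g assume "g \<in> kernel ?G ?H ?f"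
        hence g: "g \<in> Hom C (\<Theta> j) (\<Theta> i)" and gb: "cmp C g (\<beta> j) = zer C (Q j) (\<Theta> i)"
          unfolding kernel_def by auto
        show "g \<in> {\<one>\<^bsub>?G\<^esub>}"
        proof (cases "i = j")
          case True
          obtain h where h: "h \<in> Hom C (sh C (K j)) (\<Theta> i)" "cmp C h (c j) = g"
            using exact_lift[OF T D1[OF ij(2)] g gb] by blast
          have c: "c j \<in> Hom C (\<Theta> j) (sh C (K j))" using dist_hom[OF T D0[OF ij(2)]] by auto
          have "h = zer C (sh C (K j)) (\<Theta> i)" using tri ij(2) h(1) True unfolding hom_zero_def by blast
          hence "g = zer C (\<Theta> j) (\<Theta> i)" using h(2) cmp_zer_left[OF T c Tob[OF ij(1)]] by simp
          thus ?thesis by simp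
        next
          case False
          thus ?thesis using thz ij g unfolding hom_zero_def by auto
        qed
      qed
    next
      show "{\<one>\<^bsub>?G\<^esub>} \<subseteq> kernel ?G ?H ?f"
        using group_hom.hom_one[OF gh] group.is_monoid[OF gG] monoid.one_closed
        unfolding kernel_def by fastforce
    qed
    have inj: "inj_on ?f (carrier ?G)" using group_hom.inj_iff_trivial_ker[OF gh] ker by simp
    have sur: "?f ` carrier ?G = carrier ?H"
    proof
      show "?f ` carrier ?G \<subseteq> carrier ?H" using cmp_in[OF T b] by auto
    next
      show "carrier ?H \<subseteq> ?f ` carrier ?G"
      proof
        fix f assume "f \<in> carrier ?H"
        hence f: "f \<in> Hom C (Q j) (\<Theta> i)" by simp
        have "cmp C f (a j) \<in> Hom C (K j) (\<Theta> i)" using cmp_in[OF T a f] .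
        hence "cmp C f (a j) = zer C (K j) (\<Theta> i)" using KZ[OF ij] unfolding hom_zero_def by blast
        then obtain h where "h \<in> Hom C (\<Theta> j) (\<Theta> i)" "cmp C h (\<beta> j) = f"
          using exact_lift[OF T D0[OF ij(2)] f] by blast
        thus "f \<in> ?f ` carrier ?G" by force
      qed
    qed
    show ?thesis unfolding iso_def bij_betw_def using hom inj sur by blast
  qed

  have PC: "hom_zero C (\<Theta> i) (unsh C (\<Theta> j))"
    if hyp: "\<forall>i \<in> {1..t}. \<forall>j \<in> {1..t}. hom_zero C (sh C (sh C (K j))) (\<Theta> i)"
      and ij: "i \<in> {1..t}" "j \<in> {1..t}" for i j
  proof -
    note D2 = rot[OF T D1[OF ij(1)]]
    note D3 = rot[OF T D2]
    note D4 = rot[OF T D3]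
    have uo: "unsh C (\<Theta> j) \<in> Ob C" and su: "sh C (unsh C (\<Theta> j)) = \<Theta> j"
      using unsh[OF T Tob[OF ij(2)]] by auto
    have q: "hom_zero C (sh C (Q i)) (\<Theta> j)"
    proof -
      have "hom_zero C (Q i) (unsh C (\<Theta> j))"
        using summand_zero[OF T bp ij(1) _ uo] qz ij(2) by blast
      thus ?thesis using hom_zero_sh[OF T Qob[OF ij(1)] uo] su by simp
    qed
    have k: "hom_zero C (sh C (sh C (K i))) (\<Theta> j)" using hyp ij by blast
    have "hom_zero C (sh C (\<Theta> i)) (\<Theta> j)" using mid_zero[OF T D4 Tob[OF ij(2)] q k] .
    thus ?thesis using hom_zero_sh[OF T Tob[OF ij(1)] uo] su by simp
  qed
  show ?thesis using KZ PA PB PC by blast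
qed

end
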